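(* Every Euclidean domain that does not contain a field (as a subring) is Egyptian.
   Context: A Euclidean function on an integral domain $D$ is a function $f: D\setminus\{0\} \to \mathbb{Z}$ such that for all nonzero $a,b \in D$: (1) $f(ab) \geq f(a)$, and (2) there exist $q,r \in D$ with $b = aq + r$ and either $r=0$ or $f(r) < f(a)$. A Euclidean domain is an integral domain admitting a Euclidean function. With $K$ the fraction field of $D$, $D$ is Egyptian if every nonzero element of $K$ is a sum of reciprocals of distinct nonzero elements of $D$. *)

theory Defs
  imports "HOL-Computational_Algebra.Fraction_Field"
begin

definition euclidean_function :: "('a::idom \<Rightarrow> int) \<Rightarrow> bool" where
  "euclidean_function f \<longleftrightarrow>
     (\<forall>a b. a \<noteq> 0 \<longrightarrow> b \<noteq> 0 \<longrightarrow> f (a * b) \<ge> f a) \<and>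
     (\<forall>a b. a \<noteq> 0 \<longrightarrow> b \<noteq> 0 \<longrightarrow>
        (\<exists>q r. b = a * q + r \<and> (r = 0 \<or> f r < f a)))"

definition euclidean_domain :: "'a::idom itself \<Rightarrow> bool" where
  "euclidean_domain TYPE('a) \<longleftrightarrow> (\<exists>f :: 'a \<Rightarrow> int. euclidean_function f)"

definition is_subring :: "'a::comm_ring_1 set \<Rightarrow> bool" where
  "is_subring F \<longleftrightarrow> 0 \<in> F \<and> 1 \<in> F \<and>
     (\<forall>x\<in>F. \<forall>y\<in>F. x + y \<in> F \<and> x * y \<in> F \<and> - x \<in> F)"

definition is_subfield :: "'a::comm_ring_1 set \<Rightarrow> bool" where
  "is_subfield F \<longleftrightarrow> is_subring F \<and> (\<forall>x\<in>F. x \<noteq> 0 \<longrightarrow> (\<exists>y\<in>F. x * y = 1))"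

definition contains_field :: "'a::comm_ring_1 itself \<Rightarrow> bool" where
  "contains_field TYPE('a) \<longleftrightarrow> (\<exists>F :: 'a set. is_subfield F)"

text \<open>Egyptian: every nonzero element of the fraction field is a sum of reciprocals
  of distinct nonzero elements of D (a finite set of nonzero elements).\<close>
definition egyptian :: "'a::idom itself \<Rightarrow> bool" where
  "egyptian TYPE('a) \<longleftrightarrow>
     (\<forall>x :: 'a fract. x \<noteq> 0 \<longrightarrow>
        (\<exists>S :: 'a set. finite S \<and> 0 \<notin> S \<and> x = (\<Sum>s\<in>S. inverse (Fract s 1))))"

end

theory Submission
  imports Defs Complex_Main "HOL-Computational_Algebra.Euclidean_Algorithm" "HOL-Computational_Algebra.Primes"
begin


lemma units_field:
  assumes U: "\<forall>n::int. of_int n \<noteq> (0::'a::idom) \<longrightarrow> (\<exists>y::'a. of_int n * y = 1)"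
  shows "contains_field TYPE('a)"
proof -
  define F where "F = {x::'a. \<exists>a b. of_int b \<noteq> (0::'a) \<and> x * of_int b = of_int a}"
  have "is_subfield F" unfolding is_subfield_def is_subring_def
  proof (intro conjI ballI impI)
    show "0 \<in> F" unfolding F_def by (rule CollectI, rule exI[of _ 0], rule exI[of _ 1]) simp
    show "1 \<in> F" unfolding F_def by (rule CollectI, rule exI[of _ 1], rule exI[of _ 1]) simp
  next
    fix x y assume "x \<in> F" "y \<in> F"
    then obtain a b a' b' where ab: "of_int b \<noteq> (0::'a)" "x * of_int b = of_int a"
      and ab': "of_int b' \<noteq> (0::'a)" "y * of_int b' = of_int a'" unfolding F_def by blast
    have nz: "of_int (b*b') \<noteq> (0::'a)" using ab ab' by simp
    have "(x + y) * of_int (b*b') = of_int (a*b' + a'*b)"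
      using ab ab' by (simp add: algebra_simps)
    thus "x + y \<in> F" using nz unfolding F_def by blast
    have "(x * y) * of_int (b*b') = of_int (a*a')"
      using ab ab' by (simp add: algebra_simps) (metis mult.assoc mult.commute)
    thus "x * y \<in> F" using nz unfolding F_def by blast
    have "(- x) * of_int b = of_int (- a)" using ab by simp
    thus "- x \<in> F" using ab unfolding F_def by blast
  next
    fix x assume "x \<in> F" "x \<noteq> 0"
    then obtain a b where ab: "of_int b \<noteq> (0::'a)" "x * of_int b = of_int a" unfolding F_def by blast
    have "of_int a \<noteq> (0::'a)" using ab \<open>x \<noteq> 0\<close> by (metis mult_eq_0_iff)
    then obtain y where y: "of_int a * y = (1::'a)" using U by metis
    have "(y * of_int b) * of_int a = of_int b" using y by (simp add: algebra_simps)
    hence "y * of_int b \<in> F" using \<open>of_int a \<noteq> 0\<close> unfolding F_def by blast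
    moreover have "x * (y * of_int b) = 1" using ab y by (metis mult.assoc mult.commute)
    ultimately show "\<exists>y\<in>F. x * y = 1" by blast
  qed
  thus ?thesis unfolding contains_field_def by blast
qed

lemma char0_of_nofield:
  assumes "\<not> contains_field TYPE('a::idom)"
  shows "CHAR('a) = 0"
proof (rule ccontr)
  assume "CHAR('a) \<noteq> 0"
  hence p: "prime CHAR('a)" by (intro prime_CHAR_semidom) simp
  have "\<forall>n::int. of_int n \<noteq> (0::'a) \<longrightarrow> (\<exists>y::'a. of_int n * y = 1)"
  proof (intro allI impI)
    fix n :: int assume n: "of_int n \<noteq> (0::'a)"
    hence "\<not> int CHAR('a) dvd n" by (simp add: of_int_eq_0_iff_char_dvd)
    moreover have "prime (int CHAR('a))" using p by simp
    ultimately have "coprime (int CHAR('a)) n" by (simp add: prime_imp_coprime)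
    hence "gcd n (int CHAR('a)) = 1" by (simp add: coprime_iff_gcd_eq_1 gcd.commute)
    then obtain u v where "u * n + v * int CHAR('a) = 1" using bezout_int by metis
    hence "of_int (u * n + v * int CHAR('a)) = (1::'a)" by simp
    hence "of_int n * of_int u = (1::'a)" by (simp add: algebra_simps)
    thus "\<exists>y::'a. of_int n * y = 1" by blast
  qed
  thus False using units_field assms by blast
qed



inductive_set usum :: "'a::idom fract set" where
  usum0: "0 \<in> usum"
| usumI: "x \<in> usum \<Longrightarrow> d \<noteq> 0 \<Longrightarrow> x + inverse (Fraction_Field.Fract d 1) \<in> usum"

lemma usum_inv: "(d::'a::idom) \<noteq> 0 \<Longrightarrow> inverse (Fraction_Field.Fract d 1) \<in> usum"
  using usumI[OF usum0, of d] by simp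

lemma usum_add: assumes "x \<in> usum" "y \<in> usum" shows "x + y \<in> usum"
  using assms(2) proof (induction y rule: usum.induct)
  case usum0 then show ?case using assms(1) by simp
next
  case (usumI y d) then show ?case using usum.usumI[of "x+y" d] by (simp add: add.assoc)
qed

lemma usum_neg: "x \<in> usum \<Longrightarrow> - x \<in> usum"
proof (induction x rule: usum.induct)
  case usum0 then show ?case by (simp add: usum.usum0)
next
  case (usumI y d)
  have "- (y + inverse (Fraction_Field.Fract d 1)) = - y + inverse (Fraction_Field.Fract (- d) 1)"
    using usumI by (simp add: Fraction_Field.eq_fract)
  then show ?case using usum.usumI[of "-y" "-d"] usumI by simp
qed

lemma usum_scale: "y \<in> usum \<Longrightarrow> (d::'a::idom) \<noteq> 0 \<Longrightarrow> y * inverse (Fraction_Field.Fract d 1) \<in> usum"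
proof (induction y rule: usum.induct)
  case usum0 then show ?case by (simp add: usum.usum0)
next
  case (usumI y e)
  have "(y + inverse (Fraction_Field.Fract e 1)) * inverse (Fraction_Field.Fract d 1) = y * inverse (Fraction_Field.Fract d 1) + inverse (Fraction_Field.Fract (e*d) 1)"
    by (simp add: distrib_right)
  then show ?case using usum.usumI[of "y * inverse (Fraction_Field.Fract d 1)" "e*d"] usumI by simp
qed

lemma usum_mult: "x \<in> usum \<Longrightarrow> y \<in> usum \<Longrightarrow> x * y \<in> usum"
proof (induction x rule: usum.induct)
  case usum0 then show ?case by (simp add: usum.usum0)
next
  case (usumI x d)
  have "(x + inverse (Fraction_Field.Fract d 1)) * y = x * y + y * inverse (Fraction_Field.Fract d 1)"
    by (simp add: algebra_simps)
  then show ?case using usum_add[of "x*y" "y * inverse (Fraction_Field.Fract d 1)"] usum_scale[of y d] usumI by simp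
qed

lemma usum_one: "1 \<in> usum"
  using usum_inv[of 1] by (simp add: Fraction_Field.fract_collapse)

lemma usum_of_nat: "of_nat k \<in> usum"
  by (induction k) (auto intro: usum_add usum_one usum.usum0)

lemma usum_of_int: "of_int k \<in> usum"
proof (cases "k \<ge> 0")
  case True
  then have "of_int k = (of_nat (nat k) :: 'a::idom fract)" by simp
  then show ?thesis using usum_of_nat by metis
next
  case False
  then have "of_int k = - (of_nat (nat (-k)) :: 'a::idom fract)" by simp
  then show ?thesis using usum_of_nat usum_neg by metis
qed

lemma Fract_of_int: "Fraction_Field.Fract (of_int m :: 'a::idom) 1 = of_int m"
proof (cases "m < 0")
  case True
  then obtain a where m: "m = - int a" by (metis less_le neg_int_cases)
  have "Fraction_Field.Fract (of_int m :: 'a) 1 = Fraction_Field.Fract (- of_nat a) 1" using m by simp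
  also have "\<dots> = - Fraction_Field.Fract (of_nat a) 1" by (simp only: minus_fract)
  also have "\<dots> = of_int m" using m by (simp only: Fraction_Field.Fract_of_nat_eq of_int_minus of_int_of_nat_eq)
  finally show ?thesis .
next
  case False
  then obtain a where m: "m = int a" by (metis nonneg_int_cases not_less)
  show ?thesis using m by (simp only: Fraction_Field.Fract_of_nat_eq of_int_of_nat_eq)
qed

lemma ef_base: "euclidean_function f \<Longrightarrow> (a::'a::idom) \<noteq> 0 \<Longrightarrow> f 1 \<le> f a"
  unfolding euclidean_function_def by (metis mult_1 one_neq_zero)

lemma ef_strict:
  assumes f: "euclidean_function f" and a: "(a::'a::idom) \<noteq> 0" and b: "b \<noteq> 0" and nb: "\<not> b dvd 1"
  shows "f a < f (a*b)"
proof -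
  have ab: "a * b \<noteq> 0" using a b by simp
  obtain q r where qr: "a = (a*b) * q + r" "r = 0 \<or> f r < f (a*b)"
    using f ab a unfolding euclidean_function_def by blast
  have r: "r = a * (1 - b*q)" using qr(1) by (simp add: algebra_simps)
  have "1 - b*q \<noteq> 0" using nb by (metis dvd_triv_left eq_iff_diff_eq_0)
  hence "r \<noteq> 0" using r a by simp
  hence "f r < f (a*b)" using qr by blast
  moreover have "f a \<le> f r" using f a \<open>1 - b*q \<noteq> 0\<close> r unfolding euclidean_function_def by simp
  ultimately show ?thesis by simp
qed

lemma ef_pow:
  assumes f: "euclidean_function f" and z: "(z::'a::idom) \<noteq> 0" and nz: "\<not> z dvd 1"
  shows "f 1 + int k \<le> f (z^k)"
proof (induction k)
  case 0 then show ?case by simp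
next
  case (Suc k)
  have "f (z^k) < f (z^k * z)" using ef_strict[OF f _ z nz] z by simp
  then show ?case using Suc by (simp add: mult.commute)
qed

lemma main_usum:
  fixes f :: "'a::idom \<Rightarrow> int"
  assumes f: "euclidean_function f" and nf: "\<not> contains_field TYPE('a::idom)"
  shows "(x::'a) \<noteq> 0 \<Longrightarrow> Fraction_Field.Fract x 1 \<in> usum"
proof -
  obtain n :: int where n: "of_int n \<noteq> (0::'a)" "\<not> (\<exists>y::'a. of_int n * y = 1)"
    using units_field[where 'a='a] nf by metis
  define z :: 'a where "z = of_int n"
  have z: "z \<noteq> 0" "\<not> z dvd 1" using n unfolding z_def dvd_def by (metis, metis)
  have zu: "Fraction_Field.Fract (z^k) 1 \<in> usum" for k
  proof -
    have "Fraction_Field.Fract (z^k) 1 = of_int (n^k)"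
      unfolding z_def by (metis of_int_power Fract_of_int)
    thus ?thesis using usum_of_int by (metis of_int_power)
  qed
  show "x \<noteq> 0 \<Longrightarrow> Fraction_Field.Fract x 1 \<in> usum"
  proof (induction "nat (f x - f 1)" arbitrary: x rule: less_induct)
    case less
    define k where "k = nat (f x - f 1)"
    have fk: "f x \<le> f (z^k)" using ef_pow[OF f z, of k] unfolding k_def by (simp split: if_splits)
    have zk: "z^k \<noteq> 0" using z by simp
    obtain q r where qr: "z^k = x * q + r" "r = 0 \<or> f r < f x"
      using f less.prems zk unfolding euclidean_function_def by blast
    have q: "q \<noteq> 0"
    proof
      assume "q = 0"
      hence "r = z^k" using qr(1) by simp
      thus False using qr(2) fk zk by simp
    qed
    have ru: "Fraction_Field.Fract r 1 \<in> usum"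
    proof (cases "r = 0")
      case True then show ?thesis by (simp add: Fraction_Field.fract_collapse usum.usum0)
    next
      case False
      hence "f r < f x" using qr by blast
      moreover have "f 1 \<le> f r" using ef_base[OF f False] .
      ultimately have "nat (f r - f 1) < nat (f x - f 1)" by simp
      thus ?thesis using less.hyps False by blast
    qed
    have "Fraction_Field.Fract x 1 = (Fraction_Field.Fract (z^k) 1 + - Fraction_Field.Fract r 1) * inverse (Fraction_Field.Fract q 1)"
    proof -
      have "(Fraction_Field.Fract (z^k) 1 + - Fraction_Field.Fract r 1) * inverse (Fraction_Field.Fract q 1) = Fraction_Field.Fract (z^k - r) q" by simp
      also have "\<dots> = Fraction_Field.Fract x 1" using qr(1) q by (simp add: Fraction_Field.eq_fract)
      finally show ?thesis by simp
    qed
    moreover have "(Fraction_Field.Fract (z^k) 1 + - Fraction_Field.Fract r 1) \<in> usum" using usum_add usum_neg zu ru by blast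
    ultimately show ?case using usum_mult usum_inv q by metis
  qed
qed



lemma greedy:
  fixes p q k :: nat
  shows "0 < p \<Longrightarrow> p * k < q \<Longrightarrow> 1 \<le> k \<Longrightarrow>
    \<exists>M. finite M \<and> (\<forall>m\<in>M. k < m) \<and> (\<Sum>m\<in>M. 1 / of_nat m :: rat) = of_nat p / of_nat q"
proof (induction p arbitrary: q k rule: less_induct)
  case (less p)
  have q0: "0 < q" using less.prems by simp
  have kd: "k \<le> q div p" using less.prems by (simp add: less_eq_div_iff_mult_less_eq mult.commute)
  have qdm: "q = p * (q div p) + q mod p" by simp
  show ?case
  proof (cases "q mod p = 0")
    case True
    define c where "c = q div p"
    have qc: "q = p * c" using qdm True unfolding c_def by simp
    have "k < c" using less.prems qc by (metis mult_less_cancel1)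
    moreover have "(1::rat) / of_nat c = of_nat p / of_nat q"
      using qc less.prems(1) \<open>k < c\<close> by (simp add: field_simps)
    ultimately show ?thesis by (intro exI[of _ "{c}"]) simp
  next
    case False
    define c where "c = q div p + 1"
    define p' where "p' = p - q mod p"
    have m: "q mod p < p" using less.prems(1) by simp
    have p': "0 < p'" "p' < p" using m False unfolding p'_def by auto
    have e1: "p * (q div p) + q mod p = q" by (rule mult_div_mod_eq)
    have e2: "p * (q div p + 1) = p * (q div p) + p" by (simp add: distrib_left)
    have pc: "p * c = q + p'" unfolding c_def p'_def using e1 e2 m by linarith
    have kc: "k < c" using kd unfolding c_def by simp
    have "p \<le> p * k" using less.prems(3) by simp
    hence "p' < q" using p' less.prems(2) by linarith
    hence "p' * c < q * c" using kc by simp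
    then obtain M where M: "finite M" "\<forall>m\<in>M. c < m"
        "(\<Sum>m\<in>M. 1 / of_nat m :: rat) = of_nat p' / of_nat (q * c)"
      using less.IH[OF p'(2) p'(1) \<open>p' * c < q * c\<close>] kc by auto
    have cM: "c \<notin> M" using M(2) by blast
    have "(\<Sum>m\<in>insert c M. 1 / of_nat m :: rat) = 1 / of_nat c + of_nat p' / of_nat (q * c)"
      using M cM by simp
    also have "\<dots> = (of_nat q + of_nat p') / (of_nat q * of_nat c)"
      using q0 kc by (simp add: field_simps)
    also have "\<dots> = (of_nat (p * c)) / (of_nat q * of_nat c)" using pc by simp
    also have "\<dots> = of_nat p / of_nat q" using q0 kc by (simp add: field_simps)
    finally show ?thesis using M kc by (intro exI[of _ "insert c M"]) auto
  qed
qed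

definition H :: "nat \<Rightarrow> nat \<Rightarrow> rat" where "H a b = (\<Sum>j\<in>{a<..b}. 1 / of_nat j)"

lemma H_double: "1 \<le> a \<Longrightarrow> 1/2 \<le> H a (2*a)"
proof -
  assume a: "1 \<le> a"
  have "of_nat (card {a<..2*a}) * (1 / of_nat (2*a)) \<le> H a (2*a)"
    unfolding H_def by (rule sum_bounded_below) (use a in \<open>auto simp: field_simps\<close>)
  moreover have "of_nat (card {a<..2*a}) * (1 / of_nat (2*a) :: rat) = 1/2"
    using a by simp
  ultimately show ?thesis by simp
qed

lemma H_split: "a \<le> b \<Longrightarrow> b \<le> c \<Longrightarrow> H a c = H a b + H b c"
  unfolding H_def
  by (subst sum.union_disjoint[symmetric]) (auto intro!: sum.cong)

lemma H_Suc: "a \<le> b \<Longrightarrow> H a (Suc b) = H a b + 1 / of_nat (Suc b)"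
proof -
  assume ab: "a \<le> b"
  have "{a<..Suc b} = insert (Suc b) {a<..b}" using ab by auto
  thus ?thesis unfolding H_def by (simp add: add.commute)
qed

lemma H_big: "1 \<le> N \<Longrightarrow> 1 \<le> H N (4*N)"
proof -
  assume N: "1 \<le> N"
  have "H N (4*N) = H N (2*N) + H (2*N) (2*(2*N))" using H_split[of N "2*N" "4*N"] by simp
  moreover have "1/2 \<le> H N (2*N)" using H_double N by simp
  moreover have "1/2 \<le> H (2*N) (2*(2*N))" using H_double[of "2*N"] N by simp
  ultimately show ?thesis by simp
qed

lemma crossing:
  fixes g :: "nat \<Rightarrow> rat"
  shows "g a < 1 \<Longrightarrow> 1 \<le> g b \<Longrightarrow> a \<le> b \<Longrightarrow> \<exists>K. a \<le> K \<and> K < b \<and> g K < 1 \<and> 1 \<le> g (Suc K)"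
proof (induction b)
  case 0 then show ?case by simp
next
  case (Suc b)
  show ?case
  proof (cases "1 \<le> g b")
    case True
    then have "b \<noteq> Suc b" by simp
    from True Suc have "a \<le> b" using le_Suc_eq by (metis not_le)
    then show ?thesis using Suc True by (metis less_Suc_eq)
  next
  case False
    then show ?thesis using Suc by (metis le_Suc_eq less_Suc_eq not_le)
  qed
qed

lemma rat_nat_frac: "0 < (r::rat) \<Longrightarrow> \<exists>p q::nat. 0 < p \<and> 0 < q \<and> r = of_nat p / of_nat q"
proof -
  assume r: "0 < r"
  obtain a b where ab: "quotient_of r = (a, b)" by (cases "quotient_of r")
  have b: "b > 0" using quotient_of_denom_pos[OF ab] .
  have rab: "r = of_int a / of_int b" using quotient_of_div[OF ab] .
  have "(0::rat) < of_int a / of_int b" using r rab by simp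
  hence "(0::rat) < of_int a" using b by (simp add: zero_less_divide_iff)
  hence "a > 0" by simp
  show ?thesis
    by (rule exI[of _ "nat a"], rule exI[of _ "nat b"]) (use \<open>a > 0\<close> b rab in simp)
qed

lemma egypt_one:
  assumes N: "1 \<le> N"
  shows "\<exists>M. finite M \<and> (\<forall>m\<in>M. N < m) \<and> (\<Sum>m\<in>M. 1 / of_nat m :: rat) = 1"
proof -
  have "H N N < 1" by (simp add: H_def)
  then obtain K where K: "N \<le> K" "H N K < 1" "1 \<le> H N (Suc K)"
    using crossing[of "H N" N "4*N"] H_big[OF N] by auto
  define \<rho> where "\<rho> = 1 - H N K"
  have \<rho>0: "0 < \<rho>" using K unfolding \<rho>_def by simp
  have "\<rho> \<le> 1 / of_nat (Suc K)" using K H_Suc[OF K(1)] unfolding \<rho>_def by simp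
  also have "\<dots> < 1 / of_nat K" using K N by (simp add: field_simps)
  finally have \<rho>K: "\<rho> < 1 / of_nat K" .
  obtain p q :: nat where pq: "0 < p" "0 < q" "\<rho> = of_nat p / of_nat q" using rat_nat_frac[OF \<rho>0] by blast
  have "of_nat p / of_nat q < (1 / of_nat K :: rat)" using \<rho>K pq by simp
  hence "of_nat p * of_nat K < (of_nat q :: rat)" using pq K N by (simp add: field_simps)
  hence "p * K < q" by (metis of_nat_less_iff of_nat_mult)
  then obtain M' where M': "finite M'" "\<forall>m\<in>M'. K < m" "(\<Sum>m\<in>M'. 1 / of_nat m :: rat) = \<rho>"
    using greedy[OF pq(1)] K N pq(3) by (metis le_trans)
  define M where "M = {N<..K} \<union> M'"
  have disj: "{N<..K} \<inter> M' = {}" using M'(2) by auto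
  have "(\<Sum>m\<in>M. 1 / of_nat m :: rat) = H N K + \<rho>"
    unfolding M_def H_def using M' disj by (simp add: sum.union_disjoint)
  also have "\<dots> = 1" unfolding \<rho>_def by simp
  finally have "(\<Sum>m\<in>M. 1 / of_nat m :: rat) = 1" .
  moreover have "finite M" "\<forall>m\<in>M. N < m" using M' K unfolding M_def by auto
  ultimately show ?thesis by blast
qed

lemma transfer_sum:
  assumes M: "finite M" "0 \<notin> M" and s: "(\<Sum>m\<in>M. 1 / of_nat m :: rat) = 1"
    and c: "\<forall>n>0. of_nat n \<noteq> (0::'b::field)"
  shows "(\<Sum>m\<in>M. 1 / of_nat m :: 'b) = 1"
proof -
  define P where "P = (\<Prod>m\<in>M. m)"
  have P0: "P > 0" unfolding P_def using M by (metis gr0I prod_pos zero_less_iff_neq_zero)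
  have dv: "(P div m) * m = P" if "m \<in> M" for m
    using dvd_prodI[OF M(1) that, of id] unfolding P_def by simp
  have "(\<Sum>m\<in>M. of_nat (P div m) :: rat) = (\<Sum>m\<in>M. of_nat P * (1 / of_nat m))"
  proof (rule sum.cong)
    fix m assume m: "m \<in> M"
    hence "m > 0" using M by (metis gr0I)
    have "of_nat (P div m) * of_nat m = (of_nat P :: rat)" using dv[OF m] by (metis of_nat_mult)
    thus "of_nat (P div m) = of_nat P * (1 / (of_nat m :: rat))" using \<open>m > 0\<close> by (simp add: field_simps)
  qed simp
  also have "\<dots> = of_nat P * (\<Sum>m\<in>M. 1 / of_nat m)" by (simp only: sum_distrib_left)
  also have "\<dots> = of_nat P" using s by simp
  finally have "of_nat (\<Sum>m\<in>M. P div m) = (of_nat P :: rat)" by simp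
  hence sumP: "(\<Sum>m\<in>M. P div m) = P" using of_nat_eq_iff by blast
  have "(\<Sum>m\<in>M. 1 / of_nat m :: 'b) = (\<Sum>m\<in>M. of_nat (P div m) / of_nat P)"
  proof (rule sum.cong)
    fix m assume m: "m \<in> M"
    hence "m > 0" using M by (metis gr0I)
    have "of_nat (P div m) * of_nat m = (of_nat P :: 'b)" using dv[OF m] by (metis of_nat_mult)
    thus "1 / of_nat m = (of_nat (P div m) / of_nat P :: 'b)" using \<open>m > 0\<close> P0 c by (simp add: field_simps)
  qed simp
  also have "\<dots> = of_nat (\<Sum>m\<in>M. P div m) / of_nat P" by (simp add: sum_divide_distrib)
  also have "\<dots> = 1" using sumP P0 c by simp
  finally show ?thesis .
qed



lemma of_nat_nz_char0: "CHAR('a::idom) = 0 \<Longrightarrow> 0 < n \<Longrightarrow> of_nat n \<noteq> (0::'a)"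
  by (simp add: CHAR_eq0_iff)

lemma inj_of_nat_char0:
  assumes c: "CHAR('a::idom) = 0" shows "inj (of_nat :: nat \<Rightarrow> 'a)"
proof (rule injI)
  have key: "of_nat a = (of_nat b :: 'a) \<Longrightarrow> a < b \<Longrightarrow> False" for a b
  proof -
    assume e: "of_nat a = (of_nat b :: 'a)" and ab: "a < b"
    have "of_nat b = (of_nat a + of_nat (b - a) :: 'a)" using ab by (simp flip: of_nat_add)
    hence "of_nat (b - a) = (0::'a)" using e by simp
    thus False using of_nat_nz_char0[OF c, of "b - a"] ab by simp
  qed
  fix a b assume "of_nat a = (of_nat b :: 'a)"
  thus "a = b" using key[of a b] key[of b a] by (metis linorder_neqE_nat)
qed

lemma split_avoid:
  assumes c: "CHAR('a::idom) = 0" and S: "finite (S :: 'a set)" and d: "d \<noteq> 0"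
  shows "\<exists>T. finite T \<and> 0 \<notin> T \<and> S \<inter> T = {} \<and> inverse (Fraction_Field.Fract d 1) = (\<Sum>t\<in>T. inverse (Fraction_Field.Fract t 1))"
proof -
  define h where "h = (\<lambda>m::nat. of_nat m * d)"
  have injh: "inj h"
  proof (rule injI)
    fix a b assume "h a = h b"
    hence "of_nat a = (of_nat b :: 'a)" using d unfolding h_def by simp
    thus "a = b" using inj_of_nat_char0[OF c] by (simp add: inj_eq)
  qed
  define B where "B = h -` S"
  have fB: "finite B" unfolding B_def using S injh by (rule finite_vimageI)
  define N where "N = Max (insert 1 B)"
  have N1: "1 \<le> N" unfolding N_def using fB by simp
  have NB: "\<forall>b\<in>B. b \<le> N" unfolding N_def using fB by simp
  obtain M where M: "finite M" "\<forall>m\<in>M. N < m" "(\<Sum>m\<in>M. 1 / of_nat m :: rat) = 1"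
    using egypt_one[OF N1] by blast
  have M0: "0 \<notin> M" using M(2) by auto
  have cf: "\<forall>n>0. of_nat n \<noteq> (0::'a fract)"
  proof (intro allI impI)
    fix n :: nat assume "0 < n"
    hence "of_nat n \<noteq> (0::'a)" using of_nat_nz_char0[OF c] by simp
    thus "of_nat n \<noteq> (0::'a fract)" by (simp add: Fraction_Field.of_nat_fract Fraction_Field.eq_fract Fraction_Field.fract_expand)
  qed
  have sM: "(\<Sum>m\<in>M. 1 / of_nat m :: 'a fract) = 1" using transfer_sum[OF M(1) M0 M(3) cf] .
  define T where "T = h ` M"
  have "finite T" unfolding T_def using M by simp
  moreover have "0 \<notin> T" unfolding T_def h_def using M0 d of_nat_nz_char0[OF c] by (auto, metis gr0I)
  moreover have "S \<inter> T = {}"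
  proof (rule ccontr)
    assume "S \<inter> T \<noteq> {}"
    then obtain m where "m \<in> M" "h m \<in> S" unfolding T_def by blast
    hence "m \<in> B" unfolding B_def by simp
    thus False using NB M(2) \<open>m \<in> M\<close> by fastforce
  qed
  moreover have "(\<Sum>t\<in>T. inverse (Fraction_Field.Fract t 1)) = inverse (Fraction_Field.Fract d 1)"
  proof -
    have "(\<Sum>t\<in>T. inverse (Fraction_Field.Fract t 1)) = (\<Sum>m\<in>M. inverse (Fraction_Field.Fract (h m) 1))"
      unfolding T_def by (rule sum.reindex_cong[OF inj_on_subset[OF injh]]) auto
    also have "\<dots> = (\<Sum>m\<in>M. (1 / of_nat m) * inverse (Fraction_Field.Fract d 1))"
    proof (rule sum.cong)
      fix m assume "m \<in> M"
      have "Fraction_Field.Fract (h m) 1 = of_nat m * Fraction_Field.Fract d 1" unfolding h_def by (simp add: Fraction_Field.of_nat_fract)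
      thus "inverse (Fraction_Field.Fract (h m) 1) = (1 / of_nat m) * inverse (Fraction_Field.Fract d 1)"
        by (simp add: inverse_mult_distrib divide_inverse)
    qed simp
    also have "\<dots> = (\<Sum>m\<in>M. 1 / of_nat m) * inverse (Fraction_Field.Fract d 1)" by (simp only: sum_distrib_right)
    also have "\<dots> = inverse (Fraction_Field.Fract d 1)" using sM by simp
    finally show ?thesis .
  qed
  ultimately show ?thesis by metis
qed

lemma usum_distinct:
  assumes c: "CHAR('a::idom) = 0" and x: "(x :: 'a fract) \<in> usum"
  shows "\<exists>S::'a set. finite S \<and> 0 \<notin> S \<and> x = (\<Sum>s\<in>S. inverse (Fraction_Field.Fract s 1))"
  using x
proof (induction x rule: usum.induct)
  case usum0 then show ?case by (intro exI[of _ "{}"]) simp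
next
  case (usumI x d)
  then obtain S where S: "finite S" "0 \<notin> S" "x = (\<Sum>s\<in>S. inverse (Fraction_Field.Fract s 1))" by blast
  obtain T where T: "finite T" "0 \<notin> T" "S \<inter> T = {}" "inverse (Fraction_Field.Fract d 1) = (\<Sum>t\<in>T. inverse (Fraction_Field.Fract t 1))"
    using split_avoid[OF c S(1) usumI(2)] by blast
  have "x + inverse (Fraction_Field.Fract d 1) = (\<Sum>s\<in>S \<union> T. inverse (Fraction_Field.Fract s 1))"
    using S T by (simp add: sum.union_disjoint)
  thus ?case using S T by (intro exI[of _ "S \<union> T"]) simp
qed

theorem corollary2p13:
  assumes "euclidean_domain TYPE('a::idom)"
    and "\<not> contains_field TYPE('a)"
  shows "egyptian TYPE('a)"
proof -
  obtain f :: "'a \<Rightarrow> int" where f: "euclidean_function f"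
    using assms(1) unfolding euclidean_domain_def by blast
  have c: "CHAR('a) = 0" using char0_of_nofield[OF assms(2)] .
  show ?thesis unfolding egyptian_def
  proof (intro allI impI)
    fix x :: "'a fract" assume "x \<noteq> 0"
    then obtain a b where ab: "x = Fraction_Field.Fract a b" "b \<noteq> 0" "a \<noteq> 0"
      by (cases x rule: Fraction_Field.Fract_cases_nonzero) auto
    have "x = Fraction_Field.Fract a 1 * inverse (Fraction_Field.Fract b 1)" using ab by simp
    moreover have "Fraction_Field.Fract a 1 \<in> usum" using main_usum[OF f assms(2) ab(3)] .
    moreover have "inverse (Fraction_Field.Fract b 1) \<in> usum" using usum_inv[OF ab(2)] .
    ultimately have "x \<in> usum" using usum_mult by metis
    thus "\<exists>S :: 'a set. finite S \<and> 0 \<notin> S \<and> x = (\<Sum>s\<in>S. inverse (Fraction_Field.Fract s 1))"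
      using usum_distinct[OF c] by blast
  qed
qed

end
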